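(* Consider $n$ agents with private types $t_i\in[0,\infty)$ whose valuations are $v_i(t_i,S)=t_i\cdot|S|$ for every winning set $S\subseteq[n]$ (including sets with $i\notin S$). Then for every fixed $k\ge1$ there is no universally truthful mechanism that is competitive with respect to $\mathcal{F}^{(k)}$: for every constant $L\ge1$ there exists $n\ge k$ such that no universally truthful mechanism on $n$ such agents has expected revenue at least $\mathcal{F}^{(k)}(t)/L$ for all $t\in[0,\infty)^n$, where $\mathcal{F}^{(k)}(t)=\max\{c|S| : c\ge0,\ S\subseteq[n],\ |S|\ge k,\ v_i(t_i,S)\ge c\ \forall i\in S\}$.
   Context: A deterministic mechanism maps reported types to a winning set $S$ and prices $p_i$ charged only to $i\in S$; agent $i$'s utility is $v_i(t_i,S)-p_i$ if $i\in S$ and $v_i(t_i,S)$ if $i\notin S$; revenue is $\sum_{i\in S}p_i$. It is truthful if reporting the true type maximizes every agent's utility for all fixed reports of the others, and individually rational if each winner's payment does not exceed its value $v_i(t_i,S)$ under truthful reporting. A universally truthful mechanism is a probability distribution over deterministic truthful, individually rational mechanisms. *)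

theory Defs
  imports "HOL-Probability.Probability"
begin

text \<open>Agents are 0,...,n-1. A type profile is a function nat => real; a valid
  profile for n agents has nonnegative entries at agents i < n and is 0 elsewhere.\<close>

type_synonym profile = "nat \<Rightarrow> real"
type_synonym outcome = "nat set \<times> (nat \<Rightarrow> real)"
type_synonym mechanism = "profile \<Rightarrow> outcome"

definition valid_profile :: "nat \<Rightarrow> profile \<Rightarrow> bool" where
  "valid_profile n t \<longleftrightarrow> (\<forall>i<n. 0 \<le> t i) \<and> (\<forall>i\<ge>n. t i = 0)"

definition val :: "real \<Rightarrow> nat set \<Rightarrow> real" where
  "val ti S = ti * real (card S)"

definition utility :: "nat \<Rightarrow> real \<Rightarrow> outcome \<Rightarrow> real" where
  "utility i ti oc = (if i \<in> fst oc then val ti (fst oc) - snd oc i else val ti (fst oc))"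

definition revenue :: "outcome \<Rightarrow> real" where
  "revenue oc = (\<Sum>i\<in>fst oc. snd oc i)"

definition det_mechanism :: "nat \<Rightarrow> mechanism \<Rightarrow> bool" where
  "det_mechanism n m \<longleftrightarrow> (\<forall>t. valid_profile n t \<longrightarrow> fst (m t) \<subseteq> {..<n})"

definition truthful :: "nat \<Rightarrow> mechanism \<Rightarrow> bool" where
  "truthful n m \<longleftrightarrow> (\<forall>t i x. valid_profile n t \<longrightarrow> i < n \<longrightarrow> 0 \<le> x \<longrightarrow>
      utility i (t i) (m (t(i := x))) \<le> utility i (t i) (m t))"

definition indiv_rational :: "nat \<Rightarrow> mechanism \<Rightarrow> bool" where
  "indiv_rational n m \<longleftrightarrow> (\<forall>t i. valid_profile n t \<longrightarrow> i \<in> fst (m t) \<longrightarrow>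
      snd (m t) i \<le> val (t i) (fst (m t)))"

text \<open>A universally truthful mechanism: a probability measure on deterministic
  truthful IR mechanisms (revenue at each valid profile measurable).\<close>
definition univ_truthful :: "nat \<Rightarrow> mechanism measure \<Rightarrow> bool" where
  "univ_truthful n D \<longleftrightarrow> prob_space D \<and>
     (\<forall>m\<in>space D. det_mechanism n m \<and> truthful n m \<and> indiv_rational n m) \<and>
     (\<forall>t. valid_profile n t \<longrightarrow> (\<lambda>m. revenue (m t)) \<in> borel_measurable D)"

definition Fk :: "nat \<Rightarrow> nat \<Rightarrow> profile \<Rightarrow> real" where
  "Fk n k t = Sup {c * real (card S) | c S. 0 \<le> c \<and> S \<subseteq> {..<n} \<and> k \<le> card S \<and>
                    (\<forall>i\<in>S. c \<le> val (t i) S)}"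

end

theory Submission
  imports Defs
begin

definition Qp :: "nat \<Rightarrow> outcome \<Rightarrow> real" where
  "Qp i oc = (if i \<in> fst oc then snd oc i else 0)"
definition G :: "mechanism \<Rightarrow> profile \<Rightarrow> real" where
  "G m t = real (card (fst (m t)))"
definition Dp :: "nat \<Rightarrow> real \<Rightarrow> profile" where
  "Dp n x = (\<lambda>i. if i < n then x else 0)"
definition pt :: "nat \<Rightarrow> real" where
  "pt l = (if l = 0 then 0 else 2^(l-1))"

lemma utility_eq: "utility i ti oc = ti * real (card (fst oc)) - Qp i oc"
  by (simp add: utility_def Qp_def val_def)

lemma valid_upd: "valid_profile n t \<Longrightarrow> i < n \<Longrightarrow> 0 \<le> x \<Longrightarrow> valid_profile n (t(i:=x))"
  by (auto simp: valid_profile_def)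

lemma valid_Dp: "0 \<le> x \<Longrightarrow> valid_profile n (Dp n x)"
  by (auto simp: valid_profile_def Dp_def)

lemma truthfulD:
  assumes "truthful n m" "valid_profile n t" "i < n" "0 \<le> x"
  shows "utility i (t i) (m (t(i := x))) \<le> utility i (t i) (m t)"
  using assms unfolding truthful_def by blast

lemma mono1:
  assumes tr: "truthful n m" and v: "valid_profile n t" and i: "i < n"
    and x: "0 \<le> x" and xy: "x \<le> y"
  shows "G m (t(i:=x)) \<le> G m (t(i:=y))"
proof -
  have v1: "valid_profile n (t(i:=x))" using v i x by (rule valid_upd)
  have v2: "valid_profile n (t(i:=y))" using v i x xy by (intro valid_upd) auto
  have a: "utility i x (m ((t(i:=x))(i:=y))) \<le> utility i x (m (t(i:=x)))"
    using truthfulD[OF tr v1 i, of y] x xy by simp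
  have b: "utility i y (m ((t(i:=y))(i:=x))) \<le> utility i y (m (t(i:=y)))"
    using truthfulD[OF tr v2 i x] by simp
  define a1 where "a1 = G m (t(i:=x))"
  define a2 where "a2 = G m (t(i:=y))"
  have a': "x * a2 - Qp i (m (t(i:=y))) \<le> x * a1 - Qp i (m (t(i:=x)))"
    using a by (simp add: utility_eq a1_def a2_def G_def)
  have b': "y * a1 - Qp i (m (t(i:=x))) \<le> y * a2 - Qp i (m (t(i:=y)))"
    using b by (simp add: utility_eq a1_def a2_def G_def)
  show ?thesis
  proof (cases "x = y")
    case True then show ?thesis by simp
  next
    case False
    then have "0 < y - x" using xy by simp
    moreover have "(y - x) * a1 \<le> (y - x) * a2" using a' b' by (simp add: algebra_simps)
    ultimately show ?thesis unfolding a1_def a2_def by simp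
  qed
qed

lemma mono_prod:
  assumes tr: "truthful n m" and v: "valid_profile n r" and v': "valid_profile n r'"
    and le: "\<And>i. r i \<le> r' i"
  shows "G m r \<le> G m r'"
proof -
  define hyb where "hyb j = (\<lambda>i. if i < j then r' i else r i)" for j
  have vh: "valid_profile n (hyb j)" if "j \<le> n" for j
    using v v' that unfolding valid_profile_def hyb_def by auto
  have "j \<le> n \<longrightarrow> G m r \<le> G m (hyb j)" for j
  proof (induction j)
    case 0
    have "hyb 0 = r" unfolding hyb_def by auto
    then show ?case by simp
  next
    case (Suc j)
    show ?case
    proof
      assume j: "Suc j \<le> n"
      have e1: "hyb (Suc j) = (hyb j)(j := r' j)" unfolding hyb_def by (auto simp: fun_eq_iff)
      have e2: "hyb j = (hyb j)(j := r j)" unfolding hyb_def by (auto simp: fun_eq_iff)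
      have "G m ((hyb j)(j := r j)) \<le> G m ((hyb j)(j := r' j))"
        using mono1[OF tr vh[of j], of j "r j" "r' j"] j v le unfolding valid_profile_def by auto
      then show "G m r \<le> G m (hyb (Suc j))" using Suc j e1 e2 by auto
    qed
  qed
  moreover have "hyb n = r'" using v v' unfolding hyb_def valid_profile_def by (auto simp: fun_eq_iff)
  ultimately show ?thesis by auto
qed

lemma pay:
  assumes tr: "truthful n m" and v: "valid_profile n t" and i: "i < n" and x: "0 \<le> x"
  shows "Qp i (m t) \<le> Qp i (m (t(i:=x))) + t i * (G m t - G m (t(i:=x)))"
proof -
  have "utility i (t i) (m (t(i:=x))) \<le> utility i (t i) (m t)"
    using truthfulD[OF tr v i x] .
  then show ?thesis by (simp add: utility_eq G_def right_diff_distrib)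
qed

lemma ir0:
  assumes "indiv_rational n m" "valid_profile n t" "t i = 0"
  shows "Qp i (m t) \<le> 0"
proof (cases "i \<in> fst (m t)")
  case True
  then have "snd (m t) i \<le> val (t i) (fst (m t))" using assms unfolding indiv_rational_def by blast
  then show ?thesis using True assms(3) unfolding Qp_def val_def by simp
qed (simp add: Qp_def)

lemma rev_sum:
  assumes "det_mechanism n m" "valid_profile n t"
  shows "revenue (m t) = (\<Sum>i<n. Qp i (m t))"
proof -
  have s: "fst (m t) \<subseteq> {..<n}" using assms unfolding det_mechanism_def by auto
  have "(\<Sum>i<n. Qp i (m t)) = (\<Sum>i<n. if i \<in> fst (m t) then snd (m t) i else 0)"
    unfolding Qp_def by simp
  also have "\<dots> = sum (snd (m t)) ({..<n} \<inter> fst (m t))"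
    by (simp add: sum.inter_restrict)
  also have "{..<n} \<inter> fst (m t) = fst (m t)" using s by auto
  finally show ?thesis unfolding revenue_def by simp
qed

lemma pt_nonneg: "0 \<le> pt l" by (simp add: pt_def)
lemma pt_Suc: "pt (Suc l) = 2^l" by (simp add: pt_def)
lemma pt_mono_Suc: "pt l \<le> pt (Suc l)"
  by (cases l) (auto simp: pt_def)
lemma pt_mono: "l \<le> l' \<Longrightarrow> pt l \<le> pt l'"
  by (induction l' rule: dec_induct) (auto intro: order_trans[OF _ pt_mono_Suc])

lemma chain:
  assumes tr: "truthful n m" and ir: "indiv_rational n m" and i: "i < n"
  shows "l \<le> Suc J \<Longrightarrow> Qp i (m ((Dp n (pt (Suc J)))(i := pt l))) \<le>
    (\<Sum>j\<in>{1..l}. pt j * (G m (Dp n (pt j)) - G m (Dp n (pt (j - 1)))))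
    + pt l * (G m ((Dp n (pt (Suc J)))(i := pt l)) - G m (Dp n (pt l)))"
proof (induction l)
  case 0
  have "valid_profile n ((Dp n (pt (Suc J)))(i := pt 0))"
    by (intro valid_upd valid_Dp pt_nonneg i)
  then have "Qp i (m ((Dp n (pt (Suc J)))(i := pt 0))) \<le> 0"
    by (rule ir0[OF ir]) (simp add: pt_def)
  then show ?case by (simp add: pt_def fun_upd_def)
next
  case (Suc l)
  define D where "D = Dp n (pt (Suc J))"
  define T where "T = D(i := pt (Suc l))"
  have vD: "valid_profile n D" unfolding D_def by (intro valid_Dp pt_nonneg)
  have vT: "valid_profile n T" unfolding T_def by (intro valid_upd vD i pt_nonneg)
  have eT: "T(i := pt l) = D(i := pt l)" unfolding T_def by simp
  have p: "Qp i (m T) \<le> Qp i (m (D(i := pt l))) + pt (Suc l) * (G m T - G m (D(i := pt l)))"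
    using pay[OF tr vT i pt_nonneg[of l]] eT by (simp add: T_def)
  have IH: "Qp i (m (D(i := pt l))) \<le>
    (\<Sum>j\<in>{1..l}. pt j * (G m (Dp n (pt j)) - G m (Dp n (pt (j - 1)))))
    + pt l * (G m (D(i := pt l)) - G m (Dp n (pt l)))"
    using Suc unfolding D_def by (simp add: fun_upd_def)
  have hg: "G m (Dp n (pt l)) \<le> G m (D(i := pt l))"
  proof (rule mono_prod[OF tr valid_Dp[OF pt_nonneg] valid_upd[OF vD i pt_nonneg]])
    fix j
    have "pt l \<le> pt (Suc J)" using Suc.prems by (intro pt_mono) simp
    then show "Dp n (pt l) j \<le> (D(i := pt l)) j" using i pt_nonneg[of l] unfolding D_def Dp_def by auto
  qed
  have "pt l * (G m (D(i := pt l)) - G m (Dp n (pt l))) \<le>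
        pt (Suc l) * (G m (D(i := pt l)) - G m (Dp n (pt l)))"
    using hg pt_mono_Suc[of l] by (intro mult_right_mono) auto
  moreover have "(\<Sum>j\<in>{1..Suc l}. pt j * (G m (Dp n (pt j)) - G m (Dp n (pt (j - 1))))) =
     (\<Sum>j\<in>{1..l}. pt j * (G m (Dp n (pt j)) - G m (Dp n (pt (j - 1)))))
      + pt (Suc l) * (G m (Dp n (pt (Suc l))) - G m (Dp n (pt l)))"
    by simp
  ultimately have "Qp i (m T) \<le> (\<Sum>j\<in>{1..Suc l}. pt j * (G m (Dp n (pt j)) - G m (Dp n (pt (j - 1)))))
    + pt (Suc l) * (G m T - G m (Dp n (pt (Suc l))))"
    using p IH by (simp add: algebra_simps)
  then show ?case unfolding T_def D_def .
qed

lemma Phi_nonneg: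
  assumes "\<And>j. g j \<le> (g (Suc j) :: real)"
  shows "0 \<le> (\<Sum>j\<in>{1..L}. pt j * (g j - g (j - 1)))"
proof (intro sum_nonneg mult_nonneg_nonneg pt_nonneg)
  fix j assume "j \<in> {1..L}"
  then obtain j' where "j = Suc j'" by (cases j) auto
  then show "0 \<le> g j - g (j - 1)" using assms[of j'] by simp
qed

lemma Phi_sum:
  assumes mono: "\<And>j. g j \<le> (g (Suc j) :: real)"
  shows "(\<Sum>J\<le>M. (\<Sum>j\<in>{1..Suc J}. pt j * (g j - g (j - 1))) / 2^J)
         + (\<Sum>j\<in>{1..Suc M}. pt j * (g j - g (j - 1))) / 2^M \<le> 2 * (g (Suc M) - g 0)"
proof (induction M)
  case 0
  then show ?case by (simp add: pt_def)
next
  case (Suc M)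
  define P where "P = (\<Sum>j\<in>{1..Suc M}. pt j * (g j - g (j - 1)))"
  have e: "(\<Sum>j\<in>{1..Suc (Suc M)}. pt j * (g j - g (j - 1))) = P + 2^(Suc M) * (g (Suc (Suc M)) - g (Suc M))"
    unfolding P_def by (simp add: pt_Suc)
  have "(\<Sum>J\<le>Suc M. (\<Sum>j\<in>{1..Suc J}. pt j * (g j - g (j - 1))) / 2^J)
         + (\<Sum>j\<in>{1..Suc (Suc M)}. pt j * (g j - g (j - 1))) / 2^(Suc M)
       = (\<Sum>J\<le>M. (\<Sum>j\<in>{1..Suc J}. pt j * (g j - g (j - 1))) / 2^J)
         + 2 * ((P + 2^(Suc M) * (g (Suc (Suc M)) - g (Suc M))) / 2^(Suc M))"
    by (simp only: sum.atMost_Suc e mult_2 add.assoc)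
  also have "2 * ((P + 2^(Suc M) * (g (Suc (Suc M)) - g (Suc M))) / 2^(Suc M)) = P / 2^M + 2 * (g (Suc (Suc M)) - g (Suc M))"
    by (simp add: field_simps del: sum.cl_ivl_Suc)
  finally have eq: "(\<Sum>J\<le>Suc M. (\<Sum>j\<in>{1..Suc J}. pt j * (g j - g (j - 1))) / 2^J)
         + (\<Sum>j\<in>{1..Suc (Suc M)}. pt j * (g j - g (j - 1))) / 2^(Suc M)
     = (\<Sum>J\<le>M. (\<Sum>j\<in>{1..Suc J}. pt j * (g j - g (j - 1))) / 2^J) + (P / 2^M + 2 * (g (Suc (Suc M)) - g (Suc M)))" .
  define A where "A = (\<Sum>J\<le>M. (\<Sum>j\<in>{1..Suc J}. pt j * (g j - g (j - 1))) / 2^J)"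
  have IH: "A + P / 2^M \<le> 2 * (g (Suc M) - g 0)" using Suc.IH unfolding A_def P_def .
  define B where "B = P / 2^M"
  have IH': "A + B \<le> 2 * (g (Suc M) - g 0)" using IH unfolding B_def .
  have "A + (B + 2 * (g (Suc (Suc M)) - g (Suc M))) \<le> 2 * (g (Suc (Suc M)) - g 0)"
    using IH' by (simp add: algebra_simps)
  then show ?case unfolding eq A_def[symmetric] B_def[symmetric] .
qed

lemma G_bounds:
  assumes "det_mechanism n m" "valid_profile n t"
  shows "0 \<le> G m t" "G m t \<le> real n"
proof -
  have "fst (m t) \<subseteq> {..<n}" using assms unfolding det_mechanism_def by auto
  then have "card (fst (m t)) \<le> card {..<n}" by (intro card_mono) auto
  then show "G m t \<le> real n" unfolding G_def by simp
qed (simp add: G_def)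

lemma lin_aux: "(a::real) + b \<le> 2 * (c - d) \<Longrightarrow> 0 \<le> b \<Longrightarrow> c \<le> x \<Longrightarrow> 0 \<le> d \<Longrightarrow> a \<le> 2 * x"
  by (simp add: algebra_simps)

lemma det_bound:
  assumes dm: "det_mechanism n m" and tr: "truthful n m" and ir: "indiv_rational n m"
  shows "(\<Sum>J\<le>M. revenue (m (Dp n (2^J))) / 2^J) \<le> 2 * real n * real n"
proof -
  define g where "g j = G m (Dp n (pt j))" for j
  define Phi where "Phi L = (\<Sum>j\<in>{1..L}. pt j * (g j - g (j - 1)))" for L
  have gm: "g j \<le> g (Suc j)" for j
    unfolding g_def using pt_mono_Suc[of j]
    by (intro mono_prod[OF tr valid_Dp[OF pt_nonneg] valid_Dp[OF pt_nonneg]]) (auto simp: Dp_def)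
  have Q: "Qp i (m (Dp n (2^J))) \<le> Phi (Suc J)" if i: "i < n" for i J
  proof -
    have e: "(Dp n (pt (Suc J)))(i := pt (Suc J)) = Dp n (pt (Suc J))"
      using i by (auto simp: Dp_def fun_eq_iff)
    show ?thesis using chain[OF tr ir i, of "Suc J" J] unfolding e Phi_def g_def by (simp add: pt_Suc)
  qed
  have R: "revenue (m (Dp n (2^J))) / 2^J \<le> real n * (Phi (Suc J) / 2^J)" for J
  proof -
    have "revenue (m (Dp n (2^J))) = (\<Sum>i<n. Qp i (m (Dp n (2^J))))"
      by (rule rev_sum[OF dm valid_Dp]) simp
    also have "\<dots> \<le> real (card {..<n}) * Phi (Suc J)"
      by (rule sum_bounded_above) (simp add: Q)
    finally have "revenue (m (Dp n (2^J))) \<le> real n * Phi (Suc J)" by simp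
    then show ?thesis by (simp add: divide_right_mono)
  qed
  have "(\<Sum>J\<le>M. revenue (m (Dp n (2^J))) / 2^J) \<le> (\<Sum>J\<le>M. real n * (Phi (Suc J) / 2^J))"
    by (intro sum_mono R)
  also have "\<dots> = real n * (\<Sum>J\<le>M. Phi (Suc J) / 2^J)" by (simp add: sum_distrib_left)
  also have "(\<Sum>J\<le>M. Phi (Suc J) / 2^J) \<le> 2 * real n"
  proof -
    have a: "(\<Sum>J\<le>M. Phi (Suc J) / 2^J) + Phi (Suc M) / 2^M \<le> 2 * (g (Suc M) - g 0)"
      unfolding Phi_def by (rule Phi_sum[of g, OF gm])
    have b: "0 \<le> Phi (Suc M) / 2^M" unfolding Phi_def using Phi_nonneg[of g, OF gm, of "Suc M"] by (intro divide_nonneg_pos) auto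
    have c: "g (Suc M) \<le> real n" "0 \<le> g 0" unfolding g_def
      using G_bounds[OF dm valid_Dp[OF pt_nonneg]] by auto
    show ?thesis using lin_aux[OF a b c] .
  qed
  then have "real n * (\<Sum>J\<le>M. Phi (Suc J) / 2^J) \<le> real n * (2 * real n)"
    by (intro mult_left_mono) auto
  finally show ?thesis by simp
qed

lemma Fk_ge:
  assumes k: "1 \<le> k" and x: "0 \<le> x"
  shows "real k * x * real k \<le> Fk k k (Dp k x)"
proof -
  define A where "A = {c * real (card S) | c S. 0 \<le> c \<and> S \<subseteq> {..<k} \<and> k \<le> card S \<and>
                    (\<forall>i\<in>S. c \<le> val (Dp k x i) S)}"
  have mem: "real k * x * real k \<in> A"
    unfolding A_def
    by (rule CollectI, rule exI[of _ "real k * x"], rule exI[of _ "{..<k}"])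
       (auto simp: val_def Dp_def x)
  have bdd: "bdd_above A"
  proof (rule bdd_aboveI[of _ "real k * x * real k"])
    fix y assume "y \<in> A"
    then obtain c S where y: "y = c * real (card S)" and c: "0 \<le> c" and S: "S \<subseteq> {..<k}"
      and kS: "k \<le> card S" and v: "\<forall>i\<in>S. c \<le> val (Dp k x i) S" unfolding A_def by blast
    have "card S \<le> card {..<k}" using S by (intro card_mono) auto
    then have cS: "card S \<le> k" by simp
    have "S \<noteq> {}" using kS k by auto
    then obtain i where i: "i \<in> S" by blast
    then have "i < k" using S by auto
    then have ci: "c \<le> x * real (card S)" using v i by (auto simp: val_def Dp_def)
    have "c * real (card S) \<le> c * real k" using c cS by (intro mult_left_mono) auto
    also have "\<dots> \<le> x * real (card S) * real k" using ci by (intro mult_right_mono) auto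
    also have "\<dots> \<le> x * real k * real k" using cS x by (intro mult_right_mono mult_left_mono) auto
    finally show "y \<le> real k * x * real k" using y by (simp add: algebra_simps)
  qed
  have "real k * x * real k \<le> Sup A" by (rule cSup_upper[OF mem bdd])
  then show ?thesis unfolding Fk_def A_def .
qed

theorem claim3:
  fixes k :: nat
  assumes "1 \<le> k"
  shows "\<forall>L::real. 1 \<le> L \<longrightarrow> (\<exists>n\<ge>k. \<not> (\<exists>D. univ_truthful n D \<and>
           (\<forall>t. valid_profile n t \<longrightarrow>
               integrable D (\<lambda>m. revenue (m t)) \<and>
               Fk n k t / L \<le> (\<integral>m. revenue (m t) \<partial>D))))"
proof (intro allI impI)
  fix L :: real assume L: "1 \<le> L"
  show "\<exists>n\<ge>k. \<not> (\<exists>D. univ_truthful n D \<and>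
           (\<forall>t. valid_profile n t \<longrightarrow>
               integrable D (\<lambda>m. revenue (m t)) \<and>
               Fk n k t / L \<le> (\<integral>m. revenue (m t) \<partial>D)))"
  proof (rule exI[of _ k], intro conjI notI)
    show "k \<le> k" by simp
  next
    assume "\<exists>D. univ_truthful k D \<and>
           (\<forall>t. valid_profile k t \<longrightarrow>
               integrable D (\<lambda>m. revenue (m t)) \<and>
               Fk k k t / L \<le> (\<integral>m. revenue (m t) \<partial>D))"
    then obtain D where ut: "univ_truthful k D" and H: "\<And>t. valid_profile k t \<Longrightarrow>
               integrable D (\<lambda>m. revenue (m t)) \<and>
               Fk k k t / L \<le> (\<integral>m. revenue (m t) \<partial>D)" by blast
    interpret prob_space D using ut unfolding univ_truthful_def by blast
    have mechs: "\<And>m. m \<in> space D \<Longrightarrow> det_mechanism k m \<and> truthful k m \<and> indiv_rational k m"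
      using ut unfolding univ_truthful_def by blast
    define M where "M = nat \<lceil>2 * L\<rceil>"
    define R where "R J m = revenue (m (Dp k (2^J))) / 2^J" for J :: nat and m :: mechanism
    have Lpos: "0 < L" using L by simp
    have kpos: "0 < real k * real k" using assms by simp
    have intR: "integrable D (R J)" for J
      unfolding R_def using H[OF valid_Dp[of "2^J" k]] by simp
    have lowJ: "real k * real k / L \<le> integral\<^sup>L D (R J)" for J
    proof -
      have "real k * 2^J * real k / L \<le> Fk k k (Dp k (2^J)) / L"
        using Fk_ge[OF assms, of "2^J"] Lpos by (intro divide_right_mono) auto
      also have "\<dots> \<le> integral\<^sup>L D (\<lambda>m. revenue (m (Dp k (2^J))))"
        using H[OF valid_Dp[of "2^J" k]] by simp
      finally have "real k * 2^J * real k / L / 2^J \<le> integral\<^sup>L D (\<lambda>m. revenue (m (Dp k (2^J)))) / 2^J"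
        by (intro divide_right_mono) auto
      then show ?thesis unfolding R_def by simp
    qed
    have "(\<Sum>J\<le>M. real k * real k / L) \<le> (\<Sum>J\<le>M. integral\<^sup>L D (R J))"
      by (intro sum_mono lowJ)
    also have "\<dots> = integral\<^sup>L D (\<lambda>m. \<Sum>J\<le>M. R J m)"
      using Bochner_Integration.integral_sum[where I="{..M}" and f=R] intR by simp
    also have "\<dots> \<le> integral\<^sup>L D (\<lambda>m. 2 * real k * real k)"
    proof (rule integral_mono)
      show "integrable D (\<lambda>m. \<Sum>J\<le>M. R J m)" using intR by auto
      show "integrable D (\<lambda>m. 2 * real k * real k)" by simp
      fix m assume "m \<in> space D"
      then have "det_mechanism k m" "truthful k m" "indiv_rational k m" using mechs by auto
      from det_bound[OF this, of M] show "(\<Sum>J\<le>M. R J m) \<le> 2 * real k * real k"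
        unfolding R_def .
    qed
    also have "\<dots> = 2 * real k * real k" by (simp add: prob_space)
    finally have "real (Suc M) * (real k * real k / L) \<le> 2 * real k * real k" by simp
    then have "real (Suc M) * (real k * real k) \<le> 2 * L * (real k * real k)"
      using Lpos by (simp add: field_simps)
    then have "real (Suc M) \<le> 2 * L" using kpos by (simp add: mult_le_cancel_right)
    moreover have "2 * L \<le> real M" unfolding M_def by (simp add: real_nat_ceiling_ge)
    ultimately show False by simp
  qed
qed

end
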